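(* Let $R\subseteq\mathbb N$ be a congruence-periodic sparse predicate, $d\in\mathbb N^+$, $\tilde R\subseteq^dR$, $n\ge2$, $\mathbf A=(A_1,\dots,A_n)$ an $n$-tuple of operators all $\neq_R0$, and $\Delta\in d\mathbb N$ sufficiently large. Let $a\in\mathbb Z$ satisfy $a>\inf\mathbf A\cdot\tilde R^n_\Delta$ and $a\le\max\{\mathbf A\cdot z:z\in\tilde R^n_\Delta,\ z_1=P^1_\Delta(a;\mathbf A,\tilde R)\}$. Then $$P_\Delta\big(a-A_1P^1_\Delta(a;\mathbf A,\tilde R);\ \mathbf A_{>1},\tilde R\big)=P^{>1}_\Delta(a;\mathbf A,\tilde R),$$ where $\mathbf A_{>1}=(A_2,\dots,A_n)$, $A_1P^1_\Delta(\cdot)$ denotes the operator $A_1$ applied to the element $P^1_\Delta(\cdot)\in\tilde R$, and $P^{>1}_\Delta(a;\mathbf A,\tilde R)$ denotes the tuple of coordinates $2,\dots,n$ of $P_\Delta(a;\mathbf A,\tilde R)$.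
   Context: Let $R\subseteq\mathbb N$ be infinite, enumerated increasingly as $(r_n)$; $\sigma:R\to R$ is the successor map, $\sigma^k$ its iterate. An operator on $R$ is $z\mapsto\sum_{i=0}^ma_i\sigma^i(z)$, $a_i\in\mathbb Z$. $A=_R0$: $Az=0$ for all $z\in R$; $A>_R0$ (resp. $<_R0$): $Az>0$ (resp. $<0$) for cofinitely many $z$. $R$ sparse: every operator satisfies (S1) $A=_R0$ or $A>_R0$ or $A<_R0$; (S2) if $A>_R0$ there is $\Delta$ with $A(\sigma^\Delta z)>z$ for all $z$. Congruence-periodic: $(r_n\bmod m)$ eventually periodic for each $m\ge1$. $\tilde R\subseteq^dR$: $\tilde R=\{r_{N+dt}:t\in\mathbb N\}$ for some $N$. For an $m$-tuple of operators $\mathbf C$, $\mathbf C\cdot z=\sum C_iz_i$, $\mathbf C\cdot S=\{\mathbf C\cdot z:z\in S\}$. $\tilde R^m_\Delta=\{z\in\tilde R^m:z_i\ge\sigma^\Delta z_{i+1}\ (1\le i\le m)\}$, $z_{m+1}:=\min\tilde R$. For an $m$-tuple $\mathbf C$ with entries $\neq_R0$ and $\Delta$ large enough that $z\mapsto\mathbf C\cdot z$ is injective on $R^m_\Delta$, $P_\Delta(x;\mathbf C,\tilde R)$ is the $z\in\tilde R^m_\Delta$ with largest $\mathbf C\cdot z$ subject to $\mathbf C\cdot z<x$ if $x>\inf\mathbf C\cdot\tilde R^m_\Delta$, and otherwise the $z\in\tilde R^m_\Delta$ minimising $\mathbf C\cdot z$; $P^i_\Delta$ is its $i$-th coordinate.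 "$\Delta$ sufficiently large" means $\Delta\ge\Delta_0$ for some suitable $\Delta_0$. *)

theory Defs
  imports Complex_Main "HOL-Library.Infinite_Set" "HOL-Library.Extended_Real"
begin

definition succR :: "nat set \<Rightarrow> nat \<Rightarrow> nat" where
  "succR R z = (LEAST y. y \<in> R \<and> z < y)"

text \<open>An operator is its coefficient list [a_0,...,a_m]; it acts by z |-> sum a_i sigma^i(z).\<close>
definition op_app :: "nat set \<Rightarrow> int list \<Rightarrow> nat \<Rightarrow> int" where
  "op_app R A z = (\<Sum>i<length A. A ! i * int ((succR R ^^ i) z))"

definition op_zero :: "nat set \<Rightarrow> int list \<Rightarrow> bool" where
  "op_zero R A \<longleftrightarrow> (\<forall>z\<in>R. op_app R A z = 0)"

definition op_pos :: "nat set \<Rightarrow> int list \<Rightarrow> bool" where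
  "op_pos R A \<longleftrightarrow> finite {z\<in>R. \<not> op_app R A z > 0}"

definition op_neg :: "nat set \<Rightarrow> int list \<Rightarrow> bool" where
  "op_neg R A \<longleftrightarrow> finite {z\<in>R. \<not> op_app R A z < 0}"

definition sparse :: "nat set \<Rightarrow> bool" where
  "sparse R \<longleftrightarrow>
     (\<forall>A. op_zero R A \<or> op_pos R A \<or> op_neg R A) \<and>
     (\<forall>A. op_pos R A \<longrightarrow> (\<exists>D. \<forall>z\<in>R. op_app R A ((succR R ^^ D) z) > int z))"

definition cong_periodic :: "nat set \<Rightarrow> bool" where
  "cong_periodic R \<longleftrightarrow>
     (\<forall>m\<ge>1. \<exists>N p. p > 0 \<and> (\<forall>n\<ge>N. enumerate R (n + p) mod m = enumerate R n mod m))"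

definition sub_d :: "nat set \<Rightarrow> nat \<Rightarrow> nat set \<Rightarrow> bool" where
  "sub_d Rt d R \<longleftrightarrow> (\<exists>N. Rt = {enumerate R (N + d * t) | t. True})"

text \<open>C . z for a tuple of operators C and a tuple z (lists, 0-indexed).\<close>
definition dotop :: "nat set \<Rightarrow> int list list \<Rightarrow> nat list \<Rightarrow> int" where
  "dotop R C z = (\<Sum>i<length C. op_app R (C ! i) (z ! i))"

text \<open>Rt^m_Delta, with z_{m+1} := min Rt; sigma is the successor map of R.\<close>
definition box :: "nat set \<Rightarrow> nat set \<Rightarrow> nat \<Rightarrow> nat \<Rightarrow> nat list set" where
  "box R Rt m D = {z. length z = m \<and> set z \<subseteq> Rt \<and>
      (\<forall>i<m. z ! i \<ge> (succR R ^^ D) (if i + 1 < m then z ! (i + 1) else Inf Rt))}"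

definition Pfun :: "nat set \<Rightarrow> nat set \<Rightarrow> nat \<Rightarrow> int list list \<Rightarrow> int \<Rightarrow> nat list" where
  "Pfun R Rt D C x =
    (let B = box R Rt (length C) D in
     if ereal (real_of_int x) > Inf ((\<lambda>z. ereal (real_of_int (dotop R C z))) ` B)
     then (THE z. z \<in> B \<and> dotop R C z < x \<and>
                 (\<forall>w\<in>B. dotop R C w < x \<longrightarrow> dotop R C w \<le> dotop R C z))
     else (THE z. z \<in> B \<and> (\<forall>w\<in>B. dotop R C z \<le> dotop R C w)))"

end

theory Submission imports Defs begin

definition opf :: "nat set \<Rightarrow> nat \<Rightarrow> (nat \<Rightarrow> int) \<Rightarrow> nat \<Rightarrow> int" where
  "opf R N g z = (\<Sum>i<N. g i * int ((succR R ^^ i) z))"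

definition posf :: "nat set \<Rightarrow> (nat \<Rightarrow> int) \<Rightarrow> bool" where
  "posf R f \<longleftrightarrow> finite {z\<in>R. \<not> 0 < f z}"


lemma max_below:
  fixes f :: "'a \<Rightarrow> int"
  assumes "\<exists>z\<in>B. f z < a"
  shows "\<exists>p\<in>B. f p < a \<and> (\<forall>w\<in>B. f w < a \<longrightarrow> f w \<le> f p)"
proof -
  define K where "K = {k::nat. \<exists>z\<in>B. f z = a - 1 - int k}"
  obtain z0 where z0: "z0 \<in> B" "f z0 < a" using assms by blast
  have "nat (a - 1 - f z0) \<in> K" unfolding K_def using z0 by (intro CollectI bexI[of _ z0]) auto
  then have kK: "(LEAST k. k \<in> K) \<in> K" by (rule LeastI)
  then obtain p where p: "p \<in> B" "f p = a - 1 - int (LEAST k. k \<in> K)" unfolding K_def by blast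
  have "f w \<le> f p" if "w \<in> B" "f w < a" for w
  proof -
    have "nat (a - 1 - f w) \<in> K" unfolding K_def using that by (intro CollectI bexI[of _ w]) auto
    then have "(LEAST k. k \<in> K) \<le> nat (a - 1 - f w)" by (rule Least_le)
    then show ?thesis using p that by linarith
  qed
  then show ?thesis using p by force
qed

context
  fixes R :: "nat set"
  assumes infR: "infinite R"
begin

lemma succ_ex: "\<exists>y. y \<in> R \<and> z < y"
  using infR unfolding infinite_nat_iff_unbounded by blast

lemma succ_in: "succR R z \<in> R" and succ_gt: "z < succR R z"
  unfolding succR_def using LeastI_ex[OF succ_ex] by auto

lemma succ_least: "y \<in> R \<Longrightarrow> z < y \<Longrightarrow> succR R z \<le> y"
  unfolding succR_def by (rule Least_le) simp

lemma succ_mono: "x \<le> y \<Longrightarrow> succR R x \<le> succR R y"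
  by (meson le_less_trans succ_gt succ_in succ_least)

lemma succ_strict: "y \<in> R \<Longrightarrow> x < y \<Longrightarrow> succR R x < succR R y"
  by (meson le_less_trans succ_gt succ_least)

lemma it_in: "x \<in> R \<Longrightarrow> (succR R ^^ j) x \<in> R"
  by (induction j) (auto simp: succ_in)

lemma it_ge: "x + j \<le> (succR R ^^ j) x"
proof (induction j)
  case (Suc j) then show ?case using succ_gt[of "(succR R ^^ j) x"] by simp
qed simp

lemma it_mono: "x \<le> y \<Longrightarrow> (succR R ^^ j) x \<le> (succR R ^^ j) y"
  by (induction j) (auto simp: succ_mono)

lemma it_strict: "y \<in> R \<Longrightarrow> x < y \<Longrightarrow> (succR R ^^ j) x < (succR R ^^ j) y"
  by (induction j) (auto simp: succ_strict it_in)

lemma it_exp_mono: "i \<le> j \<Longrightarrow> (succR R ^^ i) x \<le> (succR R ^^ j) x"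
proof -
  assume "i \<le> j"
  then obtain k where "j = k + i" by (metis add.commute le_add_diff_inverse)
  then show ?thesis using it_ge[of "(succR R ^^ i) x" k] by (simp add: funpow_add)
qed

lemma orbit: "x \<in> R \<Longrightarrow> y \<in> R \<Longrightarrow> x \<le> y \<Longrightarrow> \<exists>j. y = (succR R ^^ j) x"
proof (induction "y - x" arbitrary: x rule: less_induct)
  case less
  show ?case
  proof (cases "x = y")
    case True then show ?thesis by (metis funpow_0)
  next
    case False
    then have "x < y" using less by simp
    then have h: "succR R x \<le> y" using succ_least less by simp
    have "y - succR R x < y - x" using succ_gt[of x] \<open>x < y\<close> h by linarith
    then obtain j where "y = (succR R ^^ j) (succR R x)" using less h succ_in by blast
    then have "y = (succR R ^^ (Suc j)) x" by (simp only: funpow_Suc_right o_apply)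
    then show ?thesis by blast
  qed
qed

lemma succ_inv: "x \<in> R \<Longrightarrow> succR R x \<le> succR R u \<Longrightarrow> x \<le> u"
  using succ_strict by (meson not_le)



lemma op_app_opf: "op_app R c z = opf R (length c) ((!) c) z"
  by (simp add: op_app_def opf_def)

lemma opf_op_app: "opf R N g z = op_app R (map g [0..<N]) z"
  unfolding op_app_def opf_def by (rule sum.cong) auto

lemma opf_shift: "opf R N g (succR R z) = opf R (Suc N) (\<lambda>i. if i = 0 then 0 else g (i - 1)) z"
  unfolding opf_def sum.lessThan_Suc_shift by (simp add: funpow_swap1)

lemma opf_ext: "N \<le> M \<Longrightarrow> opf R N g z = opf R M (\<lambda>i. if i < N then g i else 0) z"
proof -
  assume "N \<le> M"
  have "opf R M (\<lambda>i. if i < N then g i else 0) z = (\<Sum>i<M. if i \<in> {..<N} then g i * int ((succR R ^^ i) z) else 0)"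
    unfolding opf_def by (rule sum.cong) auto
  also have "\<dots> = (\<Sum>i\<in>{..<M} \<inter> {..<N}. g i * int ((succR R ^^ i) z))"
    by (rule sum.inter_restrict[symmetric]) simp
  also have "{..<M} \<inter> {..<N} = {..<N}" using \<open>N \<le> M\<close> by auto
  finally show ?thesis unfolding opf_def by simp
qed

lemma opf_diff: "opf R M g1 z - opf R M g2 z = opf R M (\<lambda>i. g1 i - g2 i) z"
  unfolding opf_def by (simp add: sum_subtractf left_diff_distrib)

lemma posf_ev: "posf R f \<Longrightarrow> \<exists>t. \<forall>z\<in>R. t \<le> z \<longrightarrow> 0 < f z"
proof -
  assume "posf R f"
  then obtain m where "\<forall>n\<in>{z\<in>R. \<not> 0 < f z}. n < m" unfolding posf_def finite_nat_set_iff_bounded by blast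
  then show ?thesis by (metis (no_types, lifting) mem_Collect_eq not_le)
qed

lemma diff_rep: "\<exists>M h. \<forall>z. opf R N g (succR R z) - opf R N g z = opf R M h z"
proof (intro exI allI)
  fix z
  have "opf R N g z = opf R (Suc N) (\<lambda>i. if i < N then g i else 0) z" by (rule opf_ext) simp
  then show "opf R N g (succR R z) - opf R N g z = opf R (Suc N) (\<lambda>i. (if i = 0 then 0 else g (i - 1)) - (if i < N then g i else 0)) z"
    by (simp only: opf_shift opf_diff)
qed

lemma funpow_comm: "(succR R ^^ D) ((succR R ^^ j) w) = (succR R ^^ (D + j)) w"
  by (simp add: funpow_add)

end

context
  fixes R :: "nat set"
  assumes infR: "infinite R" and spR: "sparse R"
begin

lemma trich: "(\<forall>z\<in>R. opf R N g z = 0) \<or> posf R (opf R N g) \<or> finite {z\<in>R. \<not> opf R N g z < 0}"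
proof -
  have e: "opf R N g = op_app R (map g [0..<N])" by (rule ext, rule opf_op_app[OF infR])
  have "op_zero R (map g [0..<N]) \<or> op_pos R (map g [0..<N]) \<or> op_neg R (map g [0..<N])"
    using spR unfolding sparse_def by blast
  then show ?thesis unfolding e op_zero_def op_pos_def op_neg_def posf_def .
qed

lemma grow: "posf R (opf R N g) \<Longrightarrow> \<exists>D. \<forall>z\<in>R. int z < opf R N g ((succR R ^^ D) z)"
proof -
  have e: "opf R N g = op_app R (map g [0..<N])" by (rule ext, rule opf_op_app[OF infR])
  have "op_pos R (map g [0..<N]) \<longrightarrow> (\<exists>D. \<forall>z\<in>R. op_app R (map g [0..<N]) ((succR R ^^ D) z) > int z)"
    using spR unfolding sparse_def by blast
  then show "posf R (opf R N g) \<Longrightarrow> ?thesis" unfolding e op_pos_def posf_def by blast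
qed

lemma nonpos_ev: assumes "\<not> posf R (opf R N g)" shows "\<exists>t. \<forall>z\<in>R. t \<le> z \<longrightarrow> opf R N g z \<le> 0"
proof -
  from trich[of N g] assms consider "\<forall>z\<in>R. opf R N g z = 0" | "finite {z\<in>R. \<not> opf R N g z < 0}" by blast
  then show ?thesis
  proof cases
    case 1 then show ?thesis by auto
  next
    case 2
    then obtain m where "\<forall>n\<in>{z\<in>R. \<not> opf R N g z < 0}. n < m" unfolding finite_nat_set_iff_bounded by blast
    then show ?thesis by (metis (no_types, lifting) mem_Collect_eq not_le less_le)
  qed
qed

lemma posf_diff:
  assumes P: "posf R (opf R N g)"
  shows "posf R (\<lambda>z. opf R N g (succR R z) - opf R N g z)"
proof (rule ccontr)
  define g' where "g' = (\<lambda>i. (if i = 0 then 0 else g (i - 1)) - (if i < N then g i else 0))"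
  have eq: "opf R N g (succR R z) - opf R N g z = opf R (Suc N) g' z" for z
  proof -
    have "opf R N g z = opf R (Suc N) (\<lambda>i. if i < N then g i else 0) z" by (rule opf_ext[OF infR]) simp
    then show ?thesis by (simp only: g'_def opf_shift[OF infR] opf_diff[OF infR])
  qed
  assume "\<not> posf R (\<lambda>z. opf R N g (succR R z) - opf R N g z)"
  then have "\<not> posf R (opf R (Suc N) g')" using eq by simp
  then obtain t where t: "\<forall>z\<in>R. t \<le> z \<longrightarrow> opf R (Suc N) g' z \<le> 0" using nonpos_ev by blast
  have chain: "opf R N g ((succR R ^^ j) w) \<le> opf R N g w" if "w \<in> R" "t \<le> w" for w j
  proof (induction j)
    case (Suc j)
    have "(succR R ^^ j) w \<in> R" "t \<le> (succR R ^^ j) w"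
      using it_in[OF infR that(1)] it_ge[OF infR, of w j] that by auto
    then have "opf R N g (succR R ((succR R ^^ j) w)) \<le> opf R N g ((succR R ^^ j) w)"
      using t[rule_format, OF \<open>(succR R ^^ j) w \<in> R\<close> \<open>t \<le> (succR R ^^ j) w\<close>] eq[of "(succR R ^^ j) w"] by linarith
    then show ?case using Suc by simp
  qed simp
  obtain D where D: "\<forall>z\<in>R. int z < opf R N g ((succR R ^^ D) z)" using grow[OF P] by blast
  obtain w0 where w0: "w0 \<in> R" "t \<le> w0" using infR unfolding infinite_nat_iff_unbounded_le by blast
  define j where "j = nat (opf R N g w0) + 1"
  have "(succR R ^^ j) w0 \<in> R" using it_in[OF infR w0(1)] .
  then have "int ((succR R ^^ j) w0) < opf R N g ((succR R ^^ (D + j)) w0)"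
    using D funpow_comm[OF infR] by metis
  also have "\<dots> \<le> opf R N g w0" using chain[OF w0] by blast
  finally show False using it_ge[OF infR, of w0 j] unfolding j_def by linarith
qed


lemma mono_ev:
  assumes P: "posf R (opf R N g)"
  shows "\<exists>t. \<forall>x\<in>R. \<forall>y\<in>R. t \<le> x \<longrightarrow> x \<le> y \<longrightarrow> opf R N g x \<le> opf R N g y"
proof -
  obtain t where t: "\<forall>w\<in>R. t \<le> w \<longrightarrow> 0 < opf R N g (succR R w) - opf R N g w"
    using posf_ev[OF infR posf_diff[OF P]] by blast
  have ch: "opf R N g x \<le> opf R N g ((succR R ^^ j) x)" if "x \<in> R" "t \<le> x" for x j
  proof (induction j)
    case (Suc j)
    have "(succR R ^^ j) x \<in> R" "t \<le> (succR R ^^ j) x"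
      using it_in[OF infR that(1)] it_ge[OF infR, of x j] that by auto
    then show ?case using t Suc by fastforce
  qed simp
  show ?thesis
  proof (intro exI[of _ t] ballI impI)
    fix x y assume "x \<in> R" "y \<in> R" "t \<le> x" "x \<le> y"
    then obtain j where "y = (succR R ^^ j) x" using orbit[OF infR] by blast
    then show "opf R N g x \<le> opf R N g y" using ch \<open>x \<in> R\<close> \<open>t \<le> x\<close> by blast
  qed
qed

lemma double: "\<exists>j. \<forall>z\<in>R. 2 * z \<le> (succR R ^^ j) z"
proof -
  define g2 where "g2 = (\<lambda>i::nat. if i = 0 then (-1::int) else 1)"
  have e: "opf R 2 g2 z = int (succR R z) - int z" for z
    unfolding opf_def g2_def by (simp add: numeral_2_eq_2)
  have "posf R (opf R 2 g2)" unfolding posf_def e using succ_gt[OF infR] by simp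
  then obtain D where D: "\<forall>z\<in>R. int z < opf R 2 g2 ((succR R ^^ D) z)" using grow by blast
  have "2 * z \<le> (succR R ^^ Suc D) z" if "z \<in> R" for z
  proof -
    have "int z < int (succR R ((succR R ^^ D) z)) - int ((succR R ^^ D) z)" using D that e by metis
    moreover have "z \<le> (succR R ^^ D) z" using it_ge[OF infR, of z D] by simp
    ultimately show ?thesis by simp
  qed
  then show ?thesis by blast
qed

lemma double_pow: "\<exists>j. \<forall>t. \<forall>z\<in>R. 2 ^ t * z \<le> (succR R ^^ (j * t)) z"
proof -
  obtain j where j: "\<forall>z\<in>R. 2 * z \<le> (succR R ^^ j) z" using double by blast
  have "2 ^ t * z \<le> (succR R ^^ (j * t)) z" if "z \<in> R" for t z
  proof (induction t)
    case (Suc t)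
    have "(succR R ^^ (j * t)) z \<in> R" using it_in[OF infR that] .
    then have "2 * (succR R ^^ (j * t)) z \<le> (succR R ^^ j) ((succR R ^^ (j * t)) z)" using j by blast
    also have "\<dots> = (succR R ^^ (j * Suc t)) z" by (simp add: funpow_add)
    finally show ?case using Suc by simp
  qed simp
  then show ?thesis by blast
qed

lemma beat:
  assumes P: "posf R (opf R N g)"
  shows "\<exists>E. \<forall>y\<in>R. int c * int ((succR R ^^ k) y) < opf R N g ((succR R ^^ E) y)"
proof -
  obtain D where D: "\<forall>z\<in>R. int z < opf R N g ((succR R ^^ D) z)" using grow[OF P] by blast
  obtain j where j: "\<forall>t. \<forall>z\<in>R. 2 ^ t * z \<le> (succR R ^^ (j * t)) z" using double_pow by blast
  have "int c * int ((succR R ^^ k) y) < opf R N g ((succR R ^^ (D + j * c + k)) y)" if "y \<in> R" for y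
  proof -
    have yk: "(succR R ^^ k) y \<in> R" using it_in[OF infR that] .
    define w where "w = (succR R ^^ (j * c)) ((succR R ^^ k) y)"
    have wR: "w \<in> R" unfolding w_def using it_in[OF infR yk] .
    have "c \<le> 2 ^ c" using less_exp[of c] by simp
    then have "c * (succR R ^^ k) y \<le> 2 ^ c * (succR R ^^ k) y" by simp
    also have "\<dots> \<le> w" unfolding w_def using j yk by blast
    finally have "int c * int ((succR R ^^ k) y) \<le> int w" by (metis of_nat_le_iff of_nat_mult)
    also have "\<dots> < opf R N g ((succR R ^^ D) w)" using D wR by blast
    also have "(succR R ^^ D) w = (succR R ^^ (D + j * c + k)) y" unfolding w_def by (simp add: funpow_add)
    finally show ?thesis .
  qed
  then show ?thesis by blast
qed

lemma abs_op: "\<bar>op_app R c z\<bar> \<le> (\<Sum>i<length c. \<bar>c ! i\<bar>) * int ((succR R ^^ length c) z)"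
proof -
  have "\<bar>op_app R c z\<bar> \<le> (\<Sum>i<length c. \<bar>c ! i * int ((succR R ^^ i) z)\<bar>)"
    unfolding op_app_def by (rule sum_abs)
  also have "\<dots> \<le> (\<Sum>i<length c. \<bar>c ! i\<bar> * int ((succR R ^^ length c) z))"
  proof (rule sum_mono)
    fix i assume "i \<in> {..<length c}"
    then have "(succR R ^^ i) z \<le> (succR R ^^ length c) z" using it_exp_mono[OF infR] by simp
    then show "\<bar>c ! i * int ((succR R ^^ i) z)\<bar> \<le> \<bar>c ! i\<bar> * int ((succR R ^^ length c) z)"
      by (simp add: abs_mult mult_left_mono)
  qed
  also have "\<dots> = (\<Sum>i<length c. \<bar>c ! i\<bar>) * int ((succR R ^^ length c) z)" by (simp add: sum_distrib_right)
  finally show ?thesis .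
qed


lemma dotop_cons: "dotop R (c # Cs) (x # w) = op_app R c x + dotop R Cs w"
  unfolding dotop_def by (simp only: length_Cons sum.lessThan_Suc_shift nth_Cons_0 nth_Cons_Suc)

lemma box_lower: "z \<in> box R Rt m D \<Longrightarrow> i < length z \<Longrightarrow> D \<le> z ! i"
proof -
  assume z: "z \<in> box R Rt m D" and i: "i < length z"
  then have "(succR R ^^ D) (if i + 1 < m then z ! (i + 1) else Inf Rt) \<le> z ! i" unfolding box_def by auto
  moreover have "D \<le> (succR R ^^ D) (if i + 1 < m then z ! (i + 1) else Inf Rt)"
    using it_ge[OF infR, of _ D] le_add2 le_trans by blast
  ultimately show ?thesis by linarith
qed

lemma box_step: "z \<in> box R Rt m D \<Longrightarrow> Suc i < length z \<Longrightarrow> z ! Suc i \<le> z ! i"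
proof -
  assume z: "z \<in> box R Rt m D" and i: "Suc i < length z"
  have all: "\<forall>j<m. (succR R ^^ D) (if j + 1 < m then z ! (j + 1) else Inf Rt) \<le> z ! j"
    and lz: "length z = m" using z unfolding box_def by auto
  have "i + 1 < m" "i < m" using i lz by auto
  then have "(succR R ^^ D) (z ! (i + 1)) \<le> z ! i" using all by (metis (full_types))
  moreover have "z ! (i + 1) \<le> (succR R ^^ D) (z ! (i + 1))"
    using it_ge[OF infR, of _ D] le_add1 le_trans by blast
  ultimately show ?thesis by simp
qed

lemma box_upper: "z \<in> box R Rt m D \<Longrightarrow> i < length z \<Longrightarrow> z ! i \<le> z ! 0"
proof (induction i)
  case (Suc i) then show ?case using box_step[of z Rt m D i] by simp
qed simp

lemma box_tl: "z \<in> box R Rt (Suc m) D \<Longrightarrow> tl z \<in> box R Rt m D"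
proof -
  assume z: "z \<in> box R Rt (Suc m) D"
  then obtain x w where zz: "z = x # w" unfolding box_def by (cases z) auto
  have all: "\<forall>j<Suc m. (succR R ^^ D) (if j + 1 < Suc m then z ! (j + 1) else Inf Rt) \<le> z ! j"
    and lz: "length z = Suc m" and sz: "set z \<subseteq> Rt" using z unfolding box_def by auto
  have "(succR R ^^ D) (if i + 1 < m then w ! (i + 1) else Inf Rt) \<le> w ! i" if "i < m" for i
  proof -
    have "(succR R ^^ D) (if Suc i + 1 < Suc m then z ! (Suc i + 1) else Inf Rt) \<le> z ! Suc i"
      using all that by blast
    then show ?thesis unfolding zz by (cases "Suc i < m") simp_all
  qed
  then show ?thesis unfolding box_def using lz sz zz by auto
qed

lemma box_cons: "w \<in> box R Rt (Suc m) D \<Longrightarrow> y \<in> Rt \<Longrightarrow> (succR R ^^ D) (hd w) \<le> y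
   \<Longrightarrow> y # w \<in> box R Rt (Suc (Suc m)) D"
proof -
  assume w: "w \<in> box R Rt (Suc m) D" and y: "y \<in> Rt" and h: "(succR R ^^ D) (hd w) \<le> y"
  have all: "\<forall>j<Suc m. (succR R ^^ D) (if j + 1 < Suc m then w ! (j + 1) else Inf Rt) \<le> w ! j"
    and lw: "length w = Suc m" and sw: "set w \<subseteq> Rt" using w unfolding box_def by auto
  then obtain u v where ww: "w = u # v" by (cases w) auto
  have "(succR R ^^ D) (if i + 1 < Suc (Suc m) then (y # w) ! (i + 1) else Inf Rt) \<le> (y # w) ! i"
    if i: "i < Suc (Suc m)" for i
  proof (cases i)
    case 0 then show ?thesis using h ww by simp
  next
    case (Suc k)
    then have "k < Suc m" using i by simp
    then have "(succR R ^^ D) (if k + 1 < Suc m then w ! (k + 1) else Inf Rt) \<le> w ! k"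
      using all by blast
    then show ?thesis using Suc by (cases "k < m") auto
  qed
  then show ?thesis unfolding box_def using lw sw y by auto
qed

lemma box_hd2: "z \<in> box R Rt (Suc (Suc m)) D \<Longrightarrow> (succR R ^^ D) (hd (tl z)) \<le> hd z"
proof -
  assume z: "z \<in> box R Rt (Suc (Suc m)) D"
  then obtain x u v where zz: "z = x # u # v" unfolding box_def by (cases z; cases "tl z") auto
  have "(succR R ^^ D) (if 0 + 1 < Suc (Suc m) then z ! (0 + 1) else Inf Rt) \<le> z ! 0"
    using z unfolding box_def by blast
  then show ?thesis using zz by simp
qed

definition Mt :: "int list list \<Rightarrow> int" where
  "Mt Cs = (\<Sum>i<length Cs. \<Sum>j<length (Cs ! i). \<bar>Cs ! i ! j\<bar>)"

definition Lt :: "int list list \<Rightarrow> nat" where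
  "Lt Cs = sum_list (map length Cs)"

lemma tail_bound:
  assumes "\<forall>i<length Cs. w ! i \<le> b"
  shows "\<bar>dotop R Cs w\<bar> \<le> Mt Cs * int ((succR R ^^ Lt Cs) b)"
proof -
  have "\<bar>dotop R Cs w\<bar> \<le> (\<Sum>i<length Cs. \<bar>op_app R (Cs ! i) (w ! i)\<bar>)"
    unfolding dotop_def by (rule sum_abs)
  also have "\<dots> \<le> (\<Sum>i<length Cs. (\<Sum>j<length (Cs ! i). \<bar>Cs ! i ! j\<bar>) * int ((succR R ^^ Lt Cs) b))"
  proof (rule sum_mono)
    fix i assume i: "i \<in> {..<length Cs}"
    have "length (Cs ! i) \<le> Lt Cs" unfolding Lt_def using i
      by (intro member_le_sum_list) auto
    then have "(succR R ^^ length (Cs ! i)) (w ! i) \<le> (succR R ^^ Lt Cs) b"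
      using it_exp_mono[OF infR] it_mono[OF infR] assms i by (meson lessThan_iff le_trans)
    then have "(\<Sum>j<length (Cs ! i). \<bar>Cs ! i ! j\<bar>) * int ((succR R ^^ length (Cs ! i)) (w ! i))
       \<le> (\<Sum>j<length (Cs ! i). \<bar>Cs ! i ! j\<bar>) * int ((succR R ^^ Lt Cs) b)"
      by (intro mult_left_mono) (auto intro: sum_nonneg)
    then show "\<bar>op_app R (Cs ! i) (w ! i)\<bar> \<le> (\<Sum>j<length (Cs ! i). \<bar>Cs ! i ! j\<bar>) * int ((succR R ^^ Lt Cs) b)"
      using abs_op[of "Cs ! i" "w ! i"] by linarith
  qed
  also have "\<dots> = Mt Cs * int ((succR R ^^ Lt Cs) b)" unfolding Mt_def by (simp add: sum_distrib_right)
  finally show ?thesis .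
qed


lemma Mt_nonneg: "0 \<le> Mt Cs"
  unfolding Mt_def by (intro sum_nonneg) auto

lemma dotop_nil: "dotop R [] w = 0"
  unfolding dotop_def by simp

lemma dom:
  assumes RtR: "Rt \<subseteq> R" and P: "op_pos R c"
  shows "\<exists>D0. \<forall>D\<ge>D0. \<forall>z\<in>box R Rt (Suc (length Cs)) D. \<forall>z'\<in>box R Rt (Suc (length Cs)) D.
            hd z' < hd z \<longrightarrow> dotop R (c # Cs) z' < dotop R (c # Cs) z"
proof -
  define f where "f = opf R (length c) ((!) c)"
  have fe: "op_app R c x = f x" for x unfolding f_def by (rule op_app_opf[OF infR])
  have Pf: "posf R (opf R (length c) ((!) c))" using P unfolding op_pos_def posf_def f_def[symmetric] fe .
  obtain M h where Ge: "\<forall>z. f (succR R z) - f z = opf R M h z" unfolding f_def using diff_rep[OF infR] by blast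
  have Gf: "(\<lambda>z. f (succR R z) - f z) = opf R M h" using Ge by auto
  have PG: "posf R (opf R M h)" using posf_diff[OF Pf] unfolding f_def[symmetric] Gf .
  obtain t1 where t1: "\<forall>x\<in>R. \<forall>y\<in>R. t1 \<le> x \<longrightarrow> x \<le> y \<longrightarrow> f x \<le> f y"
    using mono_ev[OF Pf] unfolding f_def by blast
  obtain t2 where t2: "\<forall>x\<in>R. \<forall>y\<in>R. t2 \<le> x \<longrightarrow> x \<le> y \<longrightarrow> opf R M h x \<le> opf R M h y"
    using mono_ev[OF PG] by blast
  obtain t3 where t3: "\<forall>z\<in>R. t3 \<le> z \<longrightarrow> 0 < opf R M h z" using posf_ev[OF infR PG] by blast
  obtain E0 where E0: "\<forall>y\<in>R. int (nat (2 * Mt Cs)) * int ((succR R ^^ Lt Cs) y) < opf R M h ((succR R ^^ E0) y)"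
    using beat[OF PG] by blast
  have Mt2: "int (nat (2 * Mt Cs)) = 2 * Mt Cs" using Mt_nonneg by simp
  show ?thesis
  proof (intro exI[of _ "Suc E0 + t1 + t2 + t3"] allI impI ballI)
    fix D z z' assume D: "Suc E0 + t1 + t2 + t3 \<le> D"
      and z: "z \<in> box R Rt (Suc (length Cs)) D" and z': "z' \<in> box R Rt (Suc (length Cs)) D"
      and lt: "hd z' < hd z"
    obtain x1 w where zz: "z = x1 # w" using z unfolding box_def by (cases z) auto
    obtain x1' w' where zz': "z' = x1' # w'" using z' unfolding box_def by (cases z') auto
    have x1R: "x1 \<in> R" and x1'R: "x1' \<in> R" using z z' RtR zz zz' unfolding box_def by auto
    have Dx1': "D \<le> x1'" using box_lower[OF z', of 0] zz' by simp
    from lt have "x1' < x1" using zz zz' by simp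
    then obtain j where j: "x1 = (succR R ^^ j) x1'" using orbit[OF infR x1'R x1R less_imp_le[OF \<open>x1' < x1\<close>]] by blast
    with \<open>x1' < x1\<close> obtain j' where "j = Suc j'" by (cases j) auto
    define u where "u = (succR R ^^ j') x1'"
    have x1u: "x1 = succR R u" using j \<open>j = Suc j'\<close> u_def by simp
    have uR: "u \<in> R" unfolding u_def using it_in[OF infR x1'R] .
    have x1'u: "x1' \<le> u" unfolding u_def using it_ge[OF infR, of x1' j'] by simp
    have "f x1' \<le> f u" using t1 x1'R uR x1'u D Dx1' by auto
    moreover have "opf R M h u = f x1 - f u" using Ge x1u by simp
    ultimately have diff1: "opf R M h u \<le> f x1 - f x1'" by linarith
    have tu: "t3 \<le> u" using D Dx1' x1'u by linarith
    have dz: "dotop R (c # Cs) z = f x1 + dotop R Cs w" using zz dotop_cons fe by simp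
    have dz': "dotop R (c # Cs) z' = f x1' + dotop R Cs w'" using zz' dotop_cons fe by simp
    show "dotop R (c # Cs) z' < dotop R (c # Cs) z"
    proof (cases Cs)
      case Nil
      have "0 < opf R M h u" using t3 uR tu by blast
      moreover have "dotop R Cs w = 0" "dotop R Cs w' = 0" using Nil dotop_nil by auto
      ultimately show ?thesis using dz dz' diff1 by linarith
    next
      case (Cons c2 Cs2)
      have w: "w \<in> box R Rt (Suc (length Cs2)) D" using box_tl[OF z] zz Cons by simp
      have w': "w' \<in> box R Rt (Suc (length Cs2)) D" using box_tl[OF z'] zz' Cons by simp
      have lw: "length w = length Cs" and lw': "length w' = length Cs" using w w' Cons unfolding box_def by auto
      define y where "y = hd w"
      define y' where "y' = hd w'"
      define Y where "Y = max y y'"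
      have wne: "w \<noteq> []" "w' \<noteq> []" using lw lw' Cons by auto
      have sw: "set w \<subseteq> Rt" "set w' \<subseteq> Rt" using w w' unfolding box_def by auto
      have yR: "y \<in> R" and y'R: "y' \<in> R" using RtR sw wne hd_in_set unfolding y_def y'_def by blast+
      have YR: "Y \<in> R" unfolding Y_def using yR y'R by (simp add: max_def)
      have wb: "\<forall>i<length Cs. w ! i \<le> Y" using box_upper[OF w] lw wne unfolding Y_def y_def
        by (metis hd_conv_nth le_max_iff_disj)
      have wb': "\<forall>i<length Cs. w' ! i \<le> Y" using box_upper[OF w'] lw' wne unfolding Y_def y'_def
        by (metis hd_conv_nth le_max_iff_disj)
      have T: "\<bar>dotop R Cs w\<bar> \<le> Mt Cs * int ((succR R ^^ Lt Cs) Y)" using tail_bound[OF wb] .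
      have T': "\<bar>dotop R Cs w'\<bar> \<le> Mt Cs * int ((succR R ^^ Lt Cs) Y)" using tail_bound[OF wb'] .
      obtain D' where D': "D = Suc D'" using D by (cases D) auto
      have "z \<in> box R Rt (Suc (Suc (length Cs2))) D" using z Cons by simp
      from box_hd2[OF this] have "(succR R ^^ D) y \<le> x1" using zz y_def by simp
      then have "succR R ((succR R ^^ D') y) \<le> succR R u" using D' x1u by simp
      then have yu: "(succR R ^^ D') y \<le> u" using succ_inv[OF infR it_in[OF infR yR]] by blast
      have "z' \<in> box R Rt (Suc (Suc (length Cs2))) D" using z' Cons by simp
      from box_hd2[OF this] have "(succR R ^^ D) y' \<le> x1'" using zz' y'_def by simp
      moreover have "(succR R ^^ D') y' \<le> (succR R ^^ D) y'" using it_exp_mono[OF infR, of D' D] D' by simp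
      ultimately have y'u: "(succR R ^^ D') y' \<le> u" using x1'u by linarith
      have Yu: "(succR R ^^ D') Y \<le> u" using yu y'u unfolding Y_def by (simp add: max_def)
      have DY: "D \<le> Y" using box_lower[OF w, of 0] wne unfolding Y_def y_def by (simp add: hd_conv_nth)
      have e1: "(succR R ^^ E0) Y \<le> (succR R ^^ D') Y" using it_exp_mono[OF infR] D D' by simp
      have e2: "t2 \<le> (succR R ^^ E0) Y" using DY D it_ge[OF infR, of Y E0] by linarith
      have inR: "(succR R ^^ E0) Y \<in> R" "(succR R ^^ D') Y \<in> R" using it_in[OF infR YR] by auto
      have "opf R M h ((succR R ^^ E0) Y) \<le> opf R M h ((succR R ^^ D') Y)" using t2 inR e1 e2 by blast
      also have "\<dots> \<le> opf R M h u" using t2 inR uR Yu e1 e2 by (meson le_trans)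
      finally have c1: "opf R M h ((succR R ^^ E0) Y) \<le> opf R M h u" .
      from E0 YR have "int (nat (2 * Mt Cs)) * int ((succR R ^^ Lt Cs) Y) < opf R M h ((succR R ^^ E0) Y)" by blast
      then have "2 * Mt Cs * int ((succR R ^^ Lt Cs) Y) < opf R M h u" using Mt2 c1 by simp
      then show ?thesis using dz dz' diff1 T T' by linarith
    qed
  qed
qed


lemma op_app_neg: "op_app R (map uminus c) z = - op_app R c z"
  unfolding op_app_def by (simp add: sum_negf)

lemma dotop_neg: "dotop R (map (map uminus) C) z = - dotop R C z"
  unfolding dotop_def by (simp add: op_app_neg sum_negf)

lemma dom_neg:
  assumes RtR: "Rt \<subseteq> R" and P: "op_neg R c"
  shows "\<exists>D0. \<forall>D\<ge>D0. \<forall>z\<in>box R Rt (Suc (length Cs)) D. \<forall>z'\<in>box R Rt (Suc (length Cs)) D.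
            hd z' < hd z \<longrightarrow> dotop R (c # Cs) z < dotop R (c # Cs) z'"
proof -
  have "op_pos R (map uminus c)" using P unfolding op_pos_def op_neg_def op_app_neg by simp
  from dom[OF RtR this, of "map (map uminus) Cs"] obtain D0 where
    D0: "\<forall>D\<ge>D0. \<forall>z\<in>box R Rt (Suc (length Cs)) D. \<forall>z'\<in>box R Rt (Suc (length Cs)) D.
            hd z' < hd z \<longrightarrow> dotop R (map (map uminus) (c # Cs)) z' < dotop R (map (map uminus) (c # Cs)) z"
    by auto
  show ?thesis
  proof (intro exI[of _ D0] allI impI ballI)
    fix D z z' assume "D0 \<le> D" "z \<in> box R Rt (Suc (length Cs)) D" "z' \<in> box R Rt (Suc (length Cs)) D" "hd z' < hd z"
    then have "dotop R (map (map uminus) (c # Cs)) z' < dotop R (map (map uminus) (c # Cs)) z" using D0 by blast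
    then show "dotop R (c # Cs) z < dotop R (c # Cs) z'" unfolding dotop_neg by simp
  qed
qed

lemma dom_ne:
  assumes RtR: "Rt \<subseteq> R" and P: "\<not> op_zero R c"
  shows "\<exists>D0. \<forall>D\<ge>D0. \<forall>z\<in>box R Rt (Suc (length Cs)) D. \<forall>z'\<in>box R Rt (Suc (length Cs)) D.
            hd z' < hd z \<longrightarrow> dotop R (c # Cs) z \<noteq> dotop R (c # Cs) z'"
proof -
  from spR have "op_zero R c \<or> op_pos R c \<or> op_neg R c" unfolding sparse_def by blast
  with P have "op_pos R c \<or> op_neg R c" by blast
  then show ?thesis
  proof
    assume "op_pos R c"
    from dom[OF RtR this, of Cs] obtain D0 where D0: "\<forall>D\<ge>D0. \<forall>z\<in>box R Rt (Suc (length Cs)) D. \<forall>z'\<in>box R Rt (Suc (length Cs)) D.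
            hd z' < hd z \<longrightarrow> dotop R (c # Cs) z' < dotop R (c # Cs) z" by blast
    show ?thesis by (rule exI[of _ D0]) (use D0 in \<open>fastforce\<close>)
  next
    assume "op_neg R c"
    from dom_neg[OF RtR this, of Cs] obtain D0 where D0: "\<forall>D\<ge>D0. \<forall>z\<in>box R Rt (Suc (length Cs)) D. \<forall>z'\<in>box R Rt (Suc (length Cs)) D.
            hd z' < hd z \<longrightarrow> dotop R (c # Cs) z < dotop R (c # Cs) z'" by blast
    show ?thesis by (rule exI[of _ D0]) (use D0 in \<open>fastforce\<close>)
  qed
qed

lemma inj_dot:
  assumes RtR: "Rt \<subseteq> R"
  shows "\<forall>i<length C. \<not> op_zero R (C ! i) \<Longrightarrow> \<exists>D0. \<forall>D\<ge>D0. inj_on (dotop R C) (box R Rt (length C) D)"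
proof (induction C)
  case Nil
  have "box R Rt 0 D \<subseteq> {[]}" for D unfolding box_def by auto
  then show ?case by (intro exI[of _ 0] allI impI inj_onI) (metis list.size(3) singletonD subsetD)
next
  case (Cons c Cs)
  then have "\<forall>i<length Cs. \<not> op_zero R (Cs ! i)" by (metis Suc_less_eq length_Cons nth_Cons_Suc)
  then obtain D1 where D1: "\<forall>D\<ge>D1. inj_on (dotop R Cs) (box R Rt (length Cs) D)" using Cons.IH by blast
  have "\<not> op_zero R c" using Cons.prems by (metis length_Cons nth_Cons_0 zero_less_Suc)
  from dom_ne[OF RtR this, of Cs] obtain D2 where D2: "\<forall>D\<ge>D2. \<forall>z\<in>box R Rt (Suc (length Cs)) D. \<forall>z'\<in>box R Rt (Suc (length Cs)) D.
            hd z' < hd z \<longrightarrow> dotop R (c # Cs) z \<noteq> dotop R (c # Cs) z'" by blast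
  show ?case
  proof (intro exI[of _ "max D1 D2"] allI impI inj_onI)
    fix D z z' assume D: "max D1 D2 \<le> D" and z: "z \<in> box R Rt (length (c # Cs)) D"
      and z': "z' \<in> box R Rt (length (c # Cs)) D" and eq: "dotop R (c # Cs) z = dotop R (c # Cs) z'"
    have z1: "z \<in> box R Rt (Suc (length Cs)) D" and z1': "z' \<in> box R Rt (Suc (length Cs)) D" using z z' by auto
    have "D2 \<le> D" "D1 \<le> D" using D by auto
    then have Q: "\<forall>z\<in>box R Rt (Suc (length Cs)) D. \<forall>z'\<in>box R Rt (Suc (length Cs)) D.
            hd z' < hd z \<longrightarrow> dotop R (c # Cs) z \<noteq> dotop R (c # Cs) z'" using D2 by blast
    have "\<not> hd z' < hd z" using Q z1 z1' eq by blast
    moreover have "\<not> hd z < hd z'" using Q z1 z1' eq[symmetric] by blast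
    ultimately have hh: "hd z = hd z'" by simp
    obtain x w where zz: "z = x # w" using z1 unfolding box_def by (cases z) auto
    obtain x' w' where zz': "z' = x' # w'" using z1' unfolding box_def by (cases z') auto
    have "dotop R Cs w = dotop R Cs w'" using eq hh zz zz' dotop_cons by simp
    moreover have "w \<in> box R Rt (length Cs) D" "w' \<in> box R Rt (length Cs) D"
      using box_tl[OF z1] box_tl[OF z1'] zz zz' by auto
    moreover have "inj_on (dotop R Cs) (box R Rt (length Cs) D)" using D1 \<open>D1 \<le> D\<close> by blast
    ultimately have "w = w'" by (meson inj_onD)
    then show "z = z'" using hh zz zz' by simp
  qed
qed


lemma main:
  assumes RtR: "Rt \<subseteq> R" and n2: "2 \<le> n" and lA: "length A = n" and nz: "\<forall>i<n. \<not> op_zero R (A ! i)"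
  shows "\<exists>D0. \<forall>D. d dvd D \<and> D \<ge> D0 \<longrightarrow>
     (\<forall>a::int.
        ereal (real_of_int a) > Inf ((\<lambda>z. ereal (real_of_int (dotop R A z))) ` box R Rt n D) \<and>
        a \<le> Max {dotop R A z | z. z \<in> box R Rt n D \<and> hd z = hd (Pfun R Rt D A a)}
        \<longrightarrow> Pfun R Rt D (tl A) (a - op_app R (hd A) (hd (Pfun R Rt D A a)))
            = tl (Pfun R Rt D A a))"
proof -
  obtain a1 A' where AA: "A = a1 # A'" using lA n2 by (cases A) auto
  obtain a2 A'' where AA': "A' = a2 # A''" using lA n2 AA by (cases A') auto
  have nn: "n = Suc (Suc (length A''))" using lA AA AA' by simp
  have lA': "length A' = Suc (length A'')" using AA' by simp
  obtain DA where DA: "\<forall>D\<ge>DA. inj_on (dotop R A) (box R Rt (length A) D)"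
    using inj_dot[OF RtR] nz lA by blast
  have nz': "\<forall>i<length A'. \<not> op_zero R (A' ! i)" using nz lA AA by (metis Suc_less_eq length_Cons nth_Cons_Suc)
  obtain DA' where DA': "\<forall>D\<ge>DA'. inj_on (dotop R A') (box R Rt (length A') D)"
    using inj_dot[OF RtR nz'] by blast
  have a2nz: "\<not> op_zero R a2" using nz' AA' by (metis length_Cons nth_Cons_0 zero_less_Suc)
  obtain D3 where D3: "\<forall>D\<ge>D3. \<forall>z\<in>box R Rt (Suc (length A'')) D. \<forall>z'\<in>box R Rt (Suc (length A'')) D.
            hd z' < hd z \<longrightarrow> (op_pos R a2 \<longrightarrow> dotop R A' z' < dotop R A' z) \<and> (\<not> op_pos R a2 \<longrightarrow> dotop R A' z < dotop R A' z')"
  proof (cases "op_pos R a2")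
    case True
    from dom[OF RtR True, of A''] obtain D0 where "\<forall>D\<ge>D0. \<forall>z\<in>box R Rt (Suc (length A'')) D. \<forall>z'\<in>box R Rt (Suc (length A'')) D.
            hd z' < hd z \<longrightarrow> dotop R (a2 # A'') z' < dotop R (a2 # A'') z" by blast
    then show ?thesis using that True AA' by blast
  next
    case False
    from spR have "op_zero R a2 \<or> op_pos R a2 \<or> op_neg R a2" unfolding sparse_def by blast
    with a2nz False have "op_neg R a2" by blast
    from dom_neg[OF RtR this, of A''] obtain D0 where "\<forall>D\<ge>D0. \<forall>z\<in>box R Rt (Suc (length A'')) D. \<forall>z'\<in>box R Rt (Suc (length A'')) D.
            hd z' < hd z \<longrightarrow> dotop R (a2 # A'') z < dotop R (a2 # A'') z'" by blast
    then show ?thesis using that False AA' by blast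
  qed
  show ?thesis
  proof (intro exI[of _ "DA + DA' + D3"] allI impI, elim conjE)
    fix D a assume D: "DA + DA' + D3 \<le> D"
      and H1: "ereal (real_of_int a) > Inf ((\<lambda>z. ereal (real_of_int (dotop R A z))) ` box R Rt n D)"
      and H2: "a \<le> Max {dotop R A z | z. z \<in> box R Rt n D \<and> hd z = hd (Pfun R Rt D A a)}"
    define B where "B = box R Rt n D"
    define B' where "B' = box R Rt (Suc (length A'')) D"
    have injA: "inj_on (dotop R A) B" using DA D lA unfolding B_def by auto
    have injA': "inj_on (dotop R A') B'" using DA' D lA' unfolding B'_def by auto
    have Q: "\<forall>z\<in>B'. \<forall>z'\<in>B'. hd z' < hd z \<longrightarrow> (op_pos R a2 \<longrightarrow> dotop R A' z' < dotop R A' z) \<and> (\<not> op_pos R a2 \<longrightarrow> dotop R A' z < dotop R A' z')"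
    proof -
      have "D3 \<le> D" using D by simp
      then show ?thesis using D3 unfolding B'_def by blast
    qed
    have "\<exists>z\<in>B. ereal (real_of_int (dotop R A z)) < ereal (real_of_int a)"
      using H1 unfolding B_def by (simp add: Inf_less_iff)
    then have "\<exists>z\<in>B. dotop R A z < a" by simp
    from max_below[OF this] obtain p where p: "p \<in> B" "dotop R A p < a" "\<forall>w\<in>B. dotop R A w < a \<longrightarrow> dotop R A w \<le> dotop R A p"
      by blast
    have Pa: "Pfun R Rt D A a = p"
    proof -
      have "Pfun R Rt D A a = (THE z. z \<in> B \<and> dotop R A z < a \<and> (\<forall>w\<in>B. dotop R A w < a \<longrightarrow> dotop R A w \<le> dotop R A z))"
        unfolding Pfun_def Let_def using H1 lA unfolding B_def by simp
      also have "\<dots> = p"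
      proof (rule the_equality)
        show "p \<in> B \<and> dotop R A p < a \<and> (\<forall>w\<in>B. dotop R A w < a \<longrightarrow> dotop R A w \<le> dotop R A p)" using p by blast
      next
        fix z assume z: "z \<in> B \<and> dotop R A z < a \<and> (\<forall>w\<in>B. dotop R A w < a \<longrightarrow> dotop R A w \<le> dotop R A z)"
        then have "dotop R A z = dotop R A p" using p by (meson antisym)
        then show "z = p" using injA z p by (meson inj_onD)
      qed
      finally show ?thesis .
    qed
    obtain p1 pt where pp: "p = p1 # pt" using p(1) nn unfolding B_def box_def by (cases p) auto
    define S where "S = {dotop R A z | z. z \<in> B \<and> hd z = p1}"
    have "{z. z \<in> B \<and> hd z = p1} \<subseteq> {z. set z \<subseteq> {..p1} \<and> length z = n}"
    proof (intro subsetI)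
      fix z assume z: "z \<in> {z. z \<in> B \<and> hd z = p1}"
      then have zB: "z \<in> B" and zh: "hd z = p1" by auto
      then have lz: "length z = n" unfolding B_def box_def by auto
      then have "z \<noteq> []" using nn by auto
      have "set z \<subseteq> {..p1}"
      proof
        fix v assume "v \<in> set z"
        then obtain i where "i < length z" "v = z ! i" by (metis in_set_conv_nth)
        then show "v \<in> {..p1}" using box_upper[of z Rt n D i] zB zh \<open>z \<noteq> []\<close> unfolding B_def
          by (simp add: hd_conv_nth)
      qed
      then show "z \<in> {z. set z \<subseteq> {..p1} \<and> length z = n}" using lz by simp
    qed
    then have "finite {z. z \<in> B \<and> hd z = p1}" using finite_lists_length_eq[of "{..p1}" n] finite_subset by blast
    then have finS: "finite S" unfolding S_def by (simp add: setcompr_eq_image)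
    have "dotop R A p \<in> S" unfolding S_def using p(1) pp by auto
    then have "Max S \<in> S" using finS Max_in by blast
    moreover have "a \<le> Max S" using H2 Pa pp unfolding S_def B_def by simp
    ultimately obtain q where q: "q \<in> B" "hd q = p1" "a \<le> dotop R A q" unfolding S_def by auto
    obtain q1 qt where qq: "q = q1 # qt" using q(1) nn unfolding B_def box_def by (cases q) auto
    have q1: "q1 = p1" using q(2) qq by simp
    have Bn: "B = box R Rt (Suc (Suc (length A''))) D" unfolding B_def nn ..
    have ptB: "pt \<in> B'" using box_tl[of p Rt "Suc (length A'')" D] p(1) pp unfolding Bn B'_def by simp
    have qtB: "qt \<in> B'" using box_tl[of q Rt "Suc (length A'')" D] q(1) qq unfolding Bn B'_def by simp
    have dA: "dotop R A (x # w) = op_app R a1 x + dotop R A' w" for x w unfolding AA by (rule dotop_cons)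
    define x where "x = a - op_app R a1 p1"
    have ptx: "dotop R A' pt < x" using p(2) pp dA unfolding x_def by simp
    have qtx: "x \<le> dotop R A' qt" using q(3) qq q1 dA unfolding x_def by simp
    have p1Rt: "p1 \<in> Rt" using p(1) pp unfolding B_def box_def by auto
    have hq: "(succR R ^^ D) (hd qt) \<le> p1" using box_hd2[of q Rt "length A''" D] q(1) qq q1 unfolding Bn by simp
    have hp: "(succR R ^^ D) (hd pt) \<le> p1" using box_hd2[of p Rt "length A''" D] p(1) pp unfolding Bn by simp
    have maxp: "dotop R A' w \<le> dotop R A' pt" if w: "w \<in> B'" "dotop R A' w < x" for w
    proof (cases "(succR R ^^ D) (hd w) \<le> p1")
      case True
      have "p1 # w \<in> B" using box_cons[of w Rt "length A''" D p1] w(1) p1Rt True unfolding Bn B'_def by simp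
      moreover have "dotop R A (p1 # w) < a" using w(2) dA unfolding x_def by simp
      ultimately have "dotop R A (p1 # w) \<le> dotop R A p" using p(3) by blast
      then show ?thesis using pp dA by simp
    next
      case False
      have "hd qt < hd w"
      proof (rule ccontr)
        assume "\<not> hd qt < hd w"
        then have "(succR R ^^ D) (hd w) \<le> (succR R ^^ D) (hd qt)" using it_mono[OF infR] by simp
        then show False using False hq by simp
      qed
      have "hd pt < hd w"
      proof (rule ccontr)
        assume "\<not> hd pt < hd w"
        then have "(succR R ^^ D) (hd w) \<le> (succR R ^^ D) (hd pt)" using it_mono[OF infR] by simp
        then show False using False hp by simp
      qed
      show ?thesis
      proof (cases "op_pos R a2")
        case True
        then have "dotop R A' qt < dotop R A' w" using Q w(1) qtB \<open>hd qt < hd w\<close> by blast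
        then show ?thesis using qtx w(2) by simp
      next
        case False
        then have "dotop R A' w < dotop R A' pt" using Q w(1) ptB \<open>hd pt < hd w\<close> by blast
        then show ?thesis by simp
      qed
    qed
    have Px: "Pfun R Rt D A' x = pt"
    proof -
      have "Inf ((\<lambda>z. ereal (real_of_int (dotop R A' z))) ` B') \<le> ereal (real_of_int (dotop R A' pt))"
        using ptB by (rule INF_lower)
      also have "\<dots> < ereal (real_of_int x)" using ptx by simp
      finally have H1': "Inf ((\<lambda>z. ereal (real_of_int (dotop R A' z))) ` B') < ereal (real_of_int x)" .
      have "Pfun R Rt D A' x = (THE z. z \<in> B' \<and> dotop R A' z < x \<and> (\<forall>w\<in>B'. dotop R A' w < x \<longrightarrow> dotop R A' w \<le> dotop R A' z))"
        unfolding Pfun_def Let_def using H1' lA' unfolding B'_def by simp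
      also have "\<dots> = pt"
      proof (rule the_equality)
        show "pt \<in> B' \<and> dotop R A' pt < x \<and> (\<forall>w\<in>B'. dotop R A' w < x \<longrightarrow> dotop R A' w \<le> dotop R A' pt)"
          using ptB ptx maxp by blast
      next
        fix z assume z: "z \<in> B' \<and> dotop R A' z < x \<and> (\<forall>w\<in>B'. dotop R A' w < x \<longrightarrow> dotop R A' w \<le> dotop R A' z)"
        then have "dotop R A' z = dotop R A' pt" using ptB ptx maxp by (meson antisym)
        then show "z = pt" using injA' z ptB by (meson inj_onD)
      qed
      finally show ?thesis .
    qed
    show "Pfun R Rt D (tl A) (a - op_app R (hd A) (hd (Pfun R Rt D A a))) = tl (Pfun R Rt D A a)"
      using Px Pa pp AA unfolding x_def by simp
  qed
qed

end

theorem mainTheorem19: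
  fixes R Rt :: "nat set" and d n :: nat and A :: "int list list"
  assumes "infinite R" and "sparse R" and "cong_periodic R"
    and "d > 0" and "sub_d Rt d R"
    and "n \<ge> 2" and "length A = n" and "\<forall>i<n. \<not> op_zero R (A ! i)"
  shows "\<exists>D0. \<forall>D. d dvd D \<and> D \<ge> D0 \<longrightarrow>
     (\<forall>a::int.
        ereal (real_of_int a) > Inf ((\<lambda>z. ereal (real_of_int (dotop R A z))) ` box R Rt n D) \<and>
        a \<le> Max {dotop R A z | z. z \<in> box R Rt n D \<and> hd z = hd (Pfun R Rt D A a)}
        \<longrightarrow> Pfun R Rt D (tl A) (a - op_app R (hd A) (hd (Pfun R Rt D A a)))
            = tl (Pfun R Rt D A a))"
proof -
  obtain N where N: "Rt = {enumerate R (N + d * t) | t. True}" using assms(5) unfolding sub_d_def by blast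
  have RtR: "Rt \<subseteq> R" unfolding N using enumerate_in_set[OF assms(1)] by auto
  show ?thesis by (rule main[OF assms(1) assms(2) RtR assms(6) assms(7) assms(8)])
qed

end
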